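(* For all integers $n\ge 1$, $k\ge 0$ and $c\ge k$ with $c\ge1$, $$\left\langle {n \atop k}\right\rangle_{\!c}=\left\langle {n \atop k}\right\rangle_{\!k}$$ (for $k=0$ both sides equal $1$, the right side being read as $\left\langle {n \atop 0}\right\rangle_{\!0}=1$).
   Context: A $c$-rook placement on an $n\times n$ board is a placement of $cn$ rooks on the cells, several rooks being allowed in the same cell, such that every row and every column contains exactly $c$ rooks (equivalently, an $n\times n$ matrix of nonnegative integers with all row and column sums equal to $c$). A drop is a rook lying strictly below the main diagonal, i.e.\ in a cell $(i,j)$ (row $i$, column $j$) with $i>j$, counted with multiplicity. The generalized Eulerian number $\left\langle {n \atop k}\right\rangle_{\!c}$ is the number of $c$-rook placements on the $n\times n$ board with exactly $k$ drops. *)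

theory Defs
  imports Main
begin

text \<open>A c-rook placement on the n x n board is an n x n matrix of natural numbers
(rows/columns indexed by 0..n-1; entries outside the board are 0) with all
row and column sums equal to c.\<close>

definition rook_placements :: "nat \<Rightarrow> nat \<Rightarrow> (nat \<Rightarrow> nat \<Rightarrow> nat) set" where
  "rook_placements n c =
     {A. (\<forall>i j. (n \<le> i \<or> n \<le> j) \<longrightarrow> A i j = 0)
       \<and> (\<forall>i<n. (\<Sum>j<n. A i j) = c)
       \<and> (\<forall>j<n. (\<Sum>i<n. A i j) = c)}"

definition drops :: "nat \<Rightarrow> (nat \<Rightarrow> nat \<Rightarrow> nat) \<Rightarrow> nat" where
  "drops n A = (\<Sum>i<n. \<Sum>j<i. A i j)"

definition gen_eulerian :: "nat \<Rightarrow> nat \<Rightarrow> nat \<Rightarrow> nat" where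
  "gen_eulerian n k c = card {A \<in> rook_placements n c. drops n A = k}"

end

theory Submission
  imports Defs
begin

definition addI :: "nat \<Rightarrow> (nat \<Rightarrow> nat \<Rightarrow> nat) \<Rightarrow> nat \<Rightarrow> nat \<Rightarrow> nat" where
  "addI n A = (\<lambda>i j. A i j + (if i = j \<and> i < n then 1 else 0))"

definition subI :: "nat \<Rightarrow> (nat \<Rightarrow> nat \<Rightarrow> nat) \<Rightarrow> nat \<Rightarrow> nat \<Rightarrow> nat" where
  "subI n A = (\<lambda>i j. A i j - (if i = j \<and> i < n then 1 else 0))"

lemma row_addI: "i < n \<Longrightarrow> (\<Sum>j<n. addI n A i j) = (\<Sum>j<n. A i j) + 1"
  by (simp add: addI_def sum.distrib)

lemma col_addI: "j < n \<Longrightarrow> (\<Sum>i<n. addI n A i j) = (\<Sum>i<n. A i j) + 1"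
  by (simp add: addI_def sum.distrib)

lemma drops_addI: "drops n (addI n A) = drops n A"
  unfolding drops_def addI_def by (intro sum.cong refl) auto

lemma addI_in: "A \<in> rook_placements n c \<Longrightarrow> addI n A \<in> rook_placements n (Suc c)"
  unfolding rook_placements_def
  by (auto simp: row_addI col_addI) (auto simp: addI_def)

lemma diag_bound:
  assumes A: "A \<in> rook_placements n c" and i: "i < n"
  shows "c \<le> A i i + drops n A"
proof -
  have rows: "\<And>r. r < n \<Longrightarrow> (\<Sum>j<n. A r j) = c" and cols: "\<And>j. j < n \<Longrightarrow> (\<Sum>r<n. A r j) = c"
    using A by (auto simp: rook_placements_def)
  have split: "{..<n} = {..<i} \<union> {i..<n}" using i by auto
  have S: "(\<Sum>j\<le>i. \<Sum>r<n. A r j) = Suc i * c"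
    using cols i by simp
  have S2: "(\<Sum>j\<le>i. \<Sum>r<n. A r j) = (\<Sum>j\<le>i. \<Sum>r<i. A r j) + (\<Sum>j\<le>i. \<Sum>r\<in>{i..<n}. A r j)"
    unfolding split by (subst sum.union_disjoint) (auto simp: sum.distrib)
  have U: "(\<Sum>j\<le>i. \<Sum>r<i. A r j) \<le> i * c"
  proof -
    have "(\<Sum>j\<le>i. \<Sum>r<i. A r j) = (\<Sum>r<i. \<Sum>j\<le>i. A r j)" by (rule sum.swap)
    also have "\<dots> \<le> (\<Sum>r<i. \<Sum>j<n. A r j)"
      by (intro sum_mono sum_mono2) (use i in auto)
    also have "\<dots> = (\<Sum>r<i. c)" using rows i by (intro sum.cong) auto
    finally show ?thesis by simp
  qed
  have T: "(\<Sum>j\<le>i. \<Sum>r\<in>{i..<n}. A r j) = (\<Sum>r\<in>{i..<n}. \<Sum>j\<le>i. A r j)" by (rule sum.swap)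
  have T2: "(\<Sum>r\<in>{i..<n}. \<Sum>j\<le>i. A r j) \<le> (\<Sum>r\<in>{i..<n}. (if r = i then A i i else 0) + (\<Sum>j<r. A r j))"
  proof (rule sum_mono)
    fix r assume r: "r \<in> {i..<n}"
    show "(\<Sum>j\<le>i. A r j) \<le> (if r = i then A i i else 0) + (\<Sum>j<r. A r j)"
    proof (cases "r = i")
      case True
      then show ?thesis by (simp add: lessThan_Suc_atMost[symmetric])
    next
      case False
      then have "{..i} \<subseteq> {..<r}" using r by auto
      then show ?thesis using False by (simp add: sum_mono2)
    qed
  qed
  have T3: "(\<Sum>r\<in>{i..<n}. (if r = i then A i i else 0) + (\<Sum>j<r. A r j)) = A i i + (\<Sum>r\<in>{i..<n}. \<Sum>j<r. A r j)"
    using i by (simp add: sum.distrib)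
  have T4: "(\<Sum>r\<in>{i..<n}. \<Sum>j<r. A r j) \<le> drops n A"
    unfolding drops_def by (rule sum_mono2) auto
  from S S2 U T T2 T3 T4 show ?thesis by simp
qed

lemma main_step:
  assumes "k \<le> c"
  shows "gen_eulerian n k (Suc c) = gen_eulerian n k c"
proof -
  let ?P = "\<lambda>c. {A \<in> rook_placements n c. drops n A = k}"
  have inj: "inj_on (addI n) (?P c)"
  proof
    fix A B assume "A \<in> ?P c" "B \<in> ?P c" "addI n A = addI n B"
    then show "A = B" unfolding addI_def by (auto simp: fun_eq_iff split: if_splits)
  qed
  have img: "addI n ` ?P c = ?P (Suc c)"
  proof
    show "addI n ` ?P c \<subseteq> ?P (Suc c)" using addI_in drops_addI by auto
  next
    show "?P (Suc c) \<subseteq> addI n ` ?P c"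
    proof
      fix B assume B: "B \<in> ?P (Suc c)"
      have diag: "\<And>i. i < n \<Longrightarrow> 1 \<le> B i i"
        using diag_bound[of B n "Suc c"] B assms by fastforce
      have eq: "addI n (subI n B) = B"
        using diag by (auto simp: addI_def subI_def fun_eq_iff)
      have z: "\<And>i j. (n \<le> i \<or> n \<le> j) \<Longrightarrow> subI n B i j = 0"
        using B by (auto simp: subI_def rook_placements_def)
      have r: "\<And>i. i < n \<Longrightarrow> (\<Sum>j<n. subI n B i j) = c"
      proof -
        fix i assume i: "i < n"
        have "(\<Sum>j<n. addI n (subI n B) i j) = Suc c" using B i eq by (auto simp: rook_placements_def)
        then show "(\<Sum>j<n. subI n B i j) = c" using row_addI[OF i] by simp
      qed
      have cl: "\<And>j. j < n \<Longrightarrow> (\<Sum>i<n. subI n B i j) = c"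
      proof -
        fix j assume j: "j < n"
        have "(\<Sum>i<n. addI n (subI n B) i j) = Suc c" using B j eq by (auto simp: rook_placements_def)
        then show "(\<Sum>i<n. subI n B i j) = c" using col_addI[OF j] by simp
      qed
      have "subI n B \<in> ?P c"
        using z r cl B drops_addI[of n "subI n B"] eq by (auto simp: rook_placements_def)
      with eq show "B \<in> addI n ` ?P c" by force
    qed
  qed
  show ?thesis unfolding gen_eulerian_def using card_image[OF inj] img by simp
qed

lemma gen_const: "gen_eulerian n k (k + d) = gen_eulerian n k k"
  by (induction d) (simp_all add: main_step)

theorem lemma5p1:
  fixes n k c :: nat
  assumes "n \<ge> 1" and "c \<ge> k" and "c \<ge> 1"
  shows "gen_eulerian n k c = gen_eulerian n k k"
  using gen_const[of n k "c - k"] assms by simp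

end
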